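(* Let $\mathcal{C}_1$ be an even-like $[n,k_1,d_1]_2$ binary linear code, let $\mathcal{C}_2$ be the $[n,1,n]_2$ repetition code generated by the all-ones vector, and let $\mathcal{C}=\{(\mathbf{u},\mathbf{u}+\mathbf{v}):\mathbf{u}\in\mathcal{C}_1,\mathbf{v}\in\mathcal{C}_2\}$. Then: 1) $\mathcal{C}$ is a binary almost Euclidean self-orthogonal code if and only if $n$ is odd; 2) $\mathcal{C}$ is a binary Euclidean self-orthogonal code if and only if $n$ is even.
   Context: A binary code is even-like if every codeword has even Hamming weight. For a binary $[N,k,d]_2$ code $\mathcal{C}$, $\mathrm{Hull}_E(\mathcal{C})=\mathcal{C}\cap\mathcal{C}^{\perp_E}$ with $\perp_E$ the dual under $\sum_ix_iy_i$; $\mathcal{C}$ is Euclidean self-orthogonal if $\dim(\mathrm{Hull}_E(\mathcal{C}))=k$ and almost Euclidean self-orthogonal if $\dim(\mathrm{Hull}_E(\mathcal{C}))=k-1$. *)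

theory Defs
  imports Main "HOL.Vector_Spaces" "HOL-Library.Z2" "HOL-Library.Function_Algebras"
begin

text \<open>Binary vectors of length n = CARD('n) are functions 'n \<Rightarrow> bit (bit = GF(2)).
  Vectors of length 2n are indexed by the sum type 'n + 'n.\<close>

definition bscale :: "bit \<Rightarrow> ('i \<Rightarrow> bit) \<Rightarrow> ('i \<Rightarrow> bit)" where
  "bscale c x = (\<lambda>i. c * x i)"

definition binary_linear_code :: "('i::finite \<Rightarrow> bit) set \<Rightarrow> bool" where
  "binary_linear_code C \<longleftrightarrow> module.subspace bscale C"

definition code_dim :: "('i::finite \<Rightarrow> bit) set \<Rightarrow> nat" where
  "code_dim C = vector_space.dim bscale C"

definition hamming_wt :: "('i::finite \<Rightarrow> bit) \<Rightarrow> nat" where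
  "hamming_wt x = card {i. x i \<noteq> 0}"

definition even_like :: "('i::finite \<Rightarrow> bit) set \<Rightarrow> bool" where
  "even_like C \<longleftrightarrow> (\<forall>x\<in>C. even (hamming_wt x))"

definition euclid_ip :: "('i::finite \<Rightarrow> bit) \<Rightarrow> ('i \<Rightarrow> bit) \<Rightarrow> bit" where
  "euclid_ip x y = (\<Sum>i\<in>UNIV. x i * y i)"

definition euclid_dual :: "('i::finite \<Rightarrow> bit) set \<Rightarrow> ('i \<Rightarrow> bit) set" where
  "euclid_dual C = {y. \<forall>x\<in>C. euclid_ip x y = 0}"

definition hull_E :: "('i::finite \<Rightarrow> bit) set \<Rightarrow> ('i \<Rightarrow> bit) set" where
  "hull_E C = C \<inter> euclid_dual C"

definition euclid_self_orth :: "('i::finite \<Rightarrow> bit) set \<Rightarrow> bool" where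
  "euclid_self_orth C \<longleftrightarrow> code_dim (hull_E C) = code_dim C"

definition almost_euclid_self_orth :: "('i::finite \<Rightarrow> bit) set \<Rightarrow> bool" where
  "almost_euclid_self_orth C \<longleftrightarrow> code_dim (hull_E C) + 1 = code_dim C"

definition repetition_code :: "('i::finite \<Rightarrow> bit) set" where
  "repetition_code = {(\<lambda>i. 0), (\<lambda>i. 1)}"

definition u_uv :: "('i::finite \<Rightarrow> bit) set \<Rightarrow> ('i \<Rightarrow> bit) set \<Rightarrow> ('i + 'i \<Rightarrow> bit) set" where
  "u_uv C1 C2 = {case_sum u (\<lambda>i. u i + v i) | u v. u \<in> C1 \<and> v \<in> C2}"

end

theory Submission imports Defs begin
lemma bit_UNIV: "(UNIV :: bit set) = {0,1}"
  using bit_not_zero_iff by auto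

lemma finite_bitfun: "finite (UNIV :: ('i::finite \<Rightarrow> bit) set)"
proof -
  have "finite {f::'i\<Rightarrow>bit. \<forall>x. (x \<in> UNIV \<longrightarrow> f x \<in> UNIV) \<and> (x \<notin> UNIV \<longrightarrow> f x = 0)}"
    by (rule finite_set_of_finite_funs) (auto simp: bit_UNIV)
  then show ?thesis by simp
qed

lemma vs_bscale: "vector_space (bscale :: bit \<Rightarrow> ('i \<Rightarrow> bit) \<Rightarrow> _)"
  by unfold_locales (auto simp: bscale_def fun_eq_iff distrib_left distrib_right)

lemma fdvs: "\<exists>B. finite_dimensional_vector_space (bscale :: bit \<Rightarrow> ('i::finite \<Rightarrow> bit) \<Rightarrow> _) B"
proof -
  interpret vector_space "bscale :: bit \<Rightarrow> ('i::finite \<Rightarrow> bit) \<Rightarrow> _" by (rule vs_bscale)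
  from basis_exists[of UNIV] obtain B where B: "independent B" "UNIV \<subseteq> span B"
    by blast
  have "finite B" by (rule finite_subset[OF subset_UNIV finite_bitfun])
  have "finite_dimensional_vector_space bscale B"
    apply (rule finite_dimensional_vector_space.intro)
     apply (rule vs_bscale)
    apply (rule finite_dimensional_vector_space_axioms.intro)
      apply (rule \<open>finite B\<close>)
     apply (rule B(1))
    using B(2) by (rule top.extremum_uniqueI)
  then show ?thesis by blast
qed

lemma of_nat_bit: "(of_nat n :: bit) = (if even n then 0 else 1)"
  by (induction n) auto

lemma sum_bit: "(\<Sum>i\<in>UNIV. (u i::bit)) = (if even (hamming_wt u) then 0 else 1)"
proof -
  have "(\<Sum>i\<in>UNIV. u i) = (\<Sum>i\<in>{i. u i \<noteq> 0}. u i)"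
    by (rule sum.mono_neutral_right) auto
  also have "\<dots> = (\<Sum>i\<in>{i. u i \<noteq> 0}. 1)" by (rule sum.cong) auto
  also have "\<dots> = of_nat (hamming_wt u)" by (simp add: hamming_wt_def)
  finally show ?thesis by (simp add: of_nat_bit)
qed

lemma bit_cases: "x = 0 \<or> x = (1::bit)"
  using bit_not_zero_iff by blast

lemma bit_id: "(x::bit) * y + (x + a) * (y + b) = x * b + a * y + a * b"
  using bit_cases[of x] bit_cases[of y] bit_cases[of a] bit_cases[of b] by auto

declare add_bit_eq_xor[simp del] mult_bit_eq_and[simp del]

lemma C_eq:
  "u_uv C1 repetition_code = {case_sum u (\<lambda>i. u i + a) | u a. u \<in> C1}"
proof (rule set_eqI, rule iffI)
  fix x assume "x \<in> u_uv C1 repetition_code"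
  then obtain u v where x: "x = case_sum u (\<lambda>i. u i + v i)" "u \<in> C1" "v \<in> repetition_code"
    unfolding u_uv_def by blast
  from x(3) have "v = (\<lambda>i. 0) \<or> v = (\<lambda>i. 1)" unfolding repetition_code_def by blast
  then obtain a where "v = (\<lambda>i. a)" by blast
  then have "x = case_sum u (\<lambda>i. u i + a)" using x(1) by simp
  then show "x \<in> {case_sum u (\<lambda>i. u i + a) | u a. u \<in> C1}" using x(2) by blast
next
  fix x assume "x \<in> {case_sum u (\<lambda>i. u i + a) | u a. u \<in> C1}"
  then obtain u a where x: "x = case_sum u (\<lambda>i. u i + a)" "u \<in> C1" by blast
  have rep: "(\<lambda>i. a) \<in> (repetition_code :: ('a \<Rightarrow> bit) set)"
    unfolding repetition_code_def using bit_cases[of a] by blast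
  show "x \<in> u_uv C1 repetition_code" unfolding u_uv_def mem_Collect_eq
    by (intro exI[of _ u] exI[of _ "\<lambda>i. a"] conjI) (simp_all add: x rep)
qed

lemma ip_eq:
  fixes u u' :: "'n::finite \<Rightarrow> bit"
  assumes "even_like C1" "u \<in> C1" "u' \<in> C1"
  shows "euclid_ip (case_sum u (\<lambda>i. u i + a)) (case_sum u' (\<lambda>i. u' i + b))
     = a * b * of_nat (card (UNIV :: 'n set))"
proof -
  have su: "(\<Sum>i\<in>UNIV. u i) = 0" "(\<Sum>i\<in>UNIV. u' i) = 0"
    using assms by (auto simp: sum_bit even_like_def simp del: add_bit_eq_xor)
  have "euclid_ip (case_sum u (\<lambda>i. u i + a)) (case_sum u' (\<lambda>i. u' i + b))
     = (\<Sum>i\<in>UNIV. u i * u' i) + (\<Sum>i\<in>UNIV. (u i + a) * (u' i + b))"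
    unfolding euclid_ip_def UNIV_Plus_UNIV[symmetric]
    by (subst sum.Plus) (auto simp del: add_bit_eq_xor mult_bit_eq_and simp: o_def)
  also have "\<dots> = (\<Sum>i\<in>UNIV. u i * b + a * u' i + a * b)"
    by (simp only: sum.distrib[symmetric] bit_id)
  also have "\<dots> = (\<Sum>i\<in>UNIV. u i) * b + a * (\<Sum>i\<in>UNIV. u' i) + (\<Sum>i\<in>(UNIV::'n set). a * b)"
    by (simp only: sum.distrib sum_distrib_left sum_distrib_right)
  also have "\<dots> = a * b * of_nat (card (UNIV :: 'n set))"
    using su by (simp del: add_bit_eq_xor mult_bit_eq_and)
  finally show ?thesis .
qed


lemma lin_f: "Vector_Spaces.linear bscale bscale (\<lambda>u::'n \<Rightarrow> bit. case_sum u u)"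
  unfolding Vector_Spaces.linear_iff
  using vs_bscale[where 'i='n] vs_bscale[where 'i="'n+'n"]
  by (auto simp: bscale_def fun_eq_iff split: sum.split)

theorem lemma8:
  fixes C1 :: "('n::finite \<Rightarrow> bit) set"
  assumes "binary_linear_code C1"
    and "even_like C1"
  shows "(almost_euclid_self_orth (u_uv C1 repetition_code) \<longleftrightarrow> odd (card (UNIV :: 'n set)))
    \<and> (euclid_self_orth (u_uv C1 repetition_code) \<longleftrightarrow> even (card (UNIV :: 'n set)))"
proof -
  define f :: "('n \<Rightarrow> bit) \<Rightarrow> ('n + 'n \<Rightarrow> bit)" where "f u = case_sum u u" for u
  define e :: "'n + 'n \<Rightarrow> bit" where "e = case_sum (\<lambda>i. 0) (\<lambda>i. 1)"
  define C where "C = u_uv C1 repetition_code"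
  obtain B1 where "finite_dimensional_vector_space (bscale :: bit \<Rightarrow> ('n \<Rightarrow> bit) \<Rightarrow> _) B1"
    using fdvs by blast
  then interpret F1: finite_dimensional_vector_space "bscale :: bit \<Rightarrow> ('n \<Rightarrow> bit) \<Rightarrow> _" B1 .
  obtain B2 where "finite_dimensional_vector_space (bscale :: bit \<Rightarrow> ('n + 'n \<Rightarrow> bit) \<Rightarrow> _) B2"
    using fdvs by blast
  then interpret F2: finite_dimensional_vector_space "bscale :: bit \<Rightarrow> ('n + 'n \<Rightarrow> bit) \<Rightarrow> _" B2 .
  interpret P: finite_dimensional_vector_space_pair_1 "bscale :: bit \<Rightarrow> ('n \<Rightarrow> bit) \<Rightarrow> _" B1
    "bscale :: bit \<Rightarrow> ('n + 'n \<Rightarrow> bit) \<Rightarrow> _"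
    by intro_locales
  have sub: "F1.subspace C1" using assms(1) by (simp add: binary_linear_code_def)
  have zero: "0 \<in> C1" using sub by (simp add: F1.subspace_def)
  have lin: "Vector_Spaces.linear bscale bscale f"
    unfolding f_def by (rule lin_f)
  have mh: "module_hom bscale bscale f" using lin module_hom_iff_linear by blast
  have inj: "inj f"
  proof (rule injI)
    fix x y assume "f x = f y"
    then have "f x (Inl i) = f y (Inl i)" for i by simp
    then show "x = y" by (simp add: f_def fun_eq_iff)
  qed
  have g_eq: "case_sum u (\<lambda>i. u i + a) = f u + bscale a e" for u a
    by (auto simp: fun_eq_iff f_def e_def bscale_def split: sum.split)
  have g0: "case_sum u (\<lambda>i. u i + 0) = f u" for u
    by (simp add: f_def)
  have C1': "C = {case_sum u (\<lambda>i. u i + a) | u a. u \<in> C1}"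
    unfolding C_def by (rule C_eq)
  have C2': "C = {f u + bscale a e | u a. u \<in> C1}"
    unfolding C1' g_eq ..
  have fC1: "F2.span (f ` C1) = f ` C1"
  proof -
    have "F1.span C1 = C1" using sub F1.span_eq_iff by blast
    then show ?thesis by (simp only: module_hom.span_image[OF mh])
  qed
  have e_notin: "e \<notin> f ` C1"
  proof
    assume "e \<in> f ` C1"
    then obtain u where "e = f u" by blast
    then have "e (Inl i) = f u (Inl i)" "e (Inr i) = f u (Inr i)" for i by simp_all
    then have "(0::bit) = u undefined" "(1::bit) = u undefined" by (simp_all add: e_def f_def)
    then show False by simp
  qed
  have span_C: "F2.span C = F2.span (insert e (f ` C1))"
  proof (rule antisym)
    have "C \<subseteq> F2.span (insert e (f ` C1))"
    proof
      fix x assume "x \<in> C"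
      then obtain u a where x: "x = f u + bscale a e" "u \<in> C1" using C2' by blast
      have "f u \<in> F2.span (insert e (f ` C1))" using x(2) by (intro F2.span_base) blast
      moreover have "bscale a e \<in> F2.span (insert e (f ` C1))"
        by (intro F2.span_scale F2.span_base) blast
      ultimately show "x \<in> F2.span (insert e (f ` C1))" unfolding x(1) by (rule F2.span_add)
    qed
    then show "F2.span C \<subseteq> F2.span (insert e (f ` C1))"
      by (rule F2.span_minimal[OF _ F2.subspace_span])
    have "e = f 0 + bscale 1 e"
      using lin_f by (simp add: Vector_Spaces.linear_iff f_def bscale_def fun_eq_iff split: sum.split)
    then have "e \<in> C" using zero C2' by blast
    moreover have "f u \<in> C" if "u \<in> C1" for u
    proof -
      have "f u = f u + bscale 0 e" by simp
      then show ?thesis using that C2' by blast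
    qed
    ultimately have "insert e (f ` C1) \<subseteq> C" by blast
    then show "F2.span (insert e (f ` C1)) \<subseteq> F2.span C" by (rule F2.span_mono)
  qed
  have dimf: "code_dim (f ` C1) = code_dim C1"
    unfolding code_dim_def using P.dim_image_eq[OF lin] inj by (simp add: inj_on_def inj_def)
  have dimC: "code_dim C = code_dim C1 + 1"
  proof -
    have "code_dim C = F2.dim (F2.span C)" by (simp add: code_dim_def)
    also have "\<dots> = F2.dim (insert e (f ` C1))" using span_C by simp
    also have "\<dots> = F2.dim (f ` C1) + 1" using F2.dim_insert[of e "f ` C1"] fC1 e_notin by simp
    finally show ?thesis using dimf by (simp add: code_dim_def)
  qed
  have ip: "euclid_ip x y = a * b * of_nat (card (UNIV :: 'n set))"
    if "x = case_sum u (\<lambda>i. u i + a)" "y = case_sum u' (\<lambda>i. u' i + b)" "u \<in> C1" "u' \<in> C1" for x y u u' a b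
    using ip_eq[OF assms(2) that(3,4)] that(1,2) by simp
  show ?thesis
  proof (cases "even (card (UNIV :: 'n set))")
    case True
    then have "(of_nat (card (UNIV :: 'n set)) :: bit) = 0" by (simp add: of_nat_bit)
    then have "hull_E C = C"
      unfolding hull_E_def euclid_dual_def C1' using ip by fastforce
    then show ?thesis using True dimC unfolding C_def[symmetric]
      by (simp add: euclid_self_orth_def almost_euclid_self_orth_def)
  next
    case False
    then have n1: "(of_nat (card (UNIV :: 'n set)) :: bit) = 1" by (simp add: of_nat_bit)
    have "hull_E C = f ` C1"
    proof (rule antisym)
      show "hull_E C \<subseteq> f ` C1"
      proof
        fix x assume "x \<in> hull_E C"
        then have xC: "x \<in> C" and orth: "\<forall>y\<in>C. euclid_ip y x = 0"
          by (auto simp: hull_E_def euclid_dual_def)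
        then obtain u a where x: "x = case_sum u (\<lambda>i. u i + a)" "u \<in> C1" using C1' by blast
        have yC: "case_sum (0::'n\<Rightarrow>bit) (\<lambda>i. 0 i + 1) \<in> C" using zero C1' by blast
        have "euclid_ip (case_sum (0::'n\<Rightarrow>bit) (\<lambda>i. 0 i + 1)) x = 1 * a * 1"
          using ip[OF refl x(1) zero x(2)] n1 by simp
        then have "a = 0" using orth yC by simp
        then show "x \<in> f ` C1" using x g0 by auto
      qed
      show "f ` C1 \<subseteq> hull_E C"
      proof
        fix x assume "x \<in> f ` C1"
        then obtain u where x: "x = case_sum u (\<lambda>i. u i + 0)" "u \<in> C1" using g0 by auto
        have "x \<in> C" using x C1' by blast
        moreover have "euclid_ip y x = 0" if "y \<in> C" for y
        proof -
          obtain u' b where y: "y = case_sum u' (\<lambda>i. u' i + b)" "u' \<in> C1" using \<open>y \<in> C\<close> C1' by blast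
          show ?thesis using ip[OF y(1) x(1) y(2) x(2)] by simp
        qed
        ultimately show "x \<in> hull_E C" by (auto simp: hull_E_def euclid_dual_def)
      qed
    qed
    then show ?thesis using False dimC dimf unfolding C_def[symmetric]
      by (simp add: euclid_self_orth_def almost_euclid_self_orth_def)
  qed
qed

end
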